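(* Let $N,d\in\mathbb{N}^*$, $\alpha>0$, and for $i\neq j$ let $\Psi_{ij}:\mathbb{R}^{2dN}\to\mathbb{R}_+$ be non-negative, bounded and locally Lipschitz. Let $(x_i(t),v_i(t))_{i\in\{1,\dots,N\},t\ge0}$ be a solution on $\mathbb{R}_+$ of $$\frac{dx_i}{dt}=v_i,\qquad \frac{dv_i}{dt}=\alpha\sum_{j=1}^NQ_t(i,j)(v_j-v_i),$$ where $Q_t(i,j)=\Psi_{ij}((x_1(t),v_1(t)),\dots,(x_N(t),v_N(t)))$ for $i\ne j$ and $Q_t(i,i)=-\sum_{j\ne i}Q_t(i,j)$. Let $(P^*_{s,t})_{0\le s\le t}$ be the solution on $\mathbb{R}_+$ of $$P^*_{t,t}=I,\qquad \partial_tP^*_{s,t}=\alpha Q_tP^*_{s,t},\qquad \partial_sP^*_{s,t}=-\alpha P^*_{s,t}Q_s,$$ and define the Dobrushin ergodicity coefficient $\mu(P^*_{s,t})=\inf_{i,j}\sum_{k=1}^N P^*_{s,t}(i,k)\wedge P^*_{s,t}(j,k)$. Then for all $0\le s\le t$, $$V(t)\le\big(1-\mu(P^*_{s,t})\big)V(s),$$ where $V(t)=\sup_{i,j}\|v_i(t)-v_j(t)\|_2$.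
   Context: $a\wedge b=\min(a,b)$; $\|\cdot\|_2$ is the Euclidean norm; $I$ is the $N\times N$ identity matrix. The matrices $P^*_{s,t}$ are stochastic matrices. *)

theory Defs
  imports "HOL-Analysis.Analysis"
begin

text \<open>Agents are indexed by a finite type 'n (N = CARD('n) \<ge> 1), space is real^'d (d = CARD('d) \<ge> 1).
A configuration ((x_1,v_1),...,(x_N,v_N)) in R^{2dN} is represented as a pair (x, v) of
elements of real^'d^'n.\<close>

definition locally_lipschitz :: "('a::metric_space \<Rightarrow> 'b::metric_space) \<Rightarrow> bool" where
  "locally_lipschitz f \<longleftrightarrow> (\<forall>z. \<exists>e>0. \<exists>L. L-lipschitz_on (ball z e) f)"

definition Qmat :: "('n::finite \<Rightarrow> 'n \<Rightarrow> ((real^'d^'n) \<times> (real^'d^'n)) \<Rightarrow> real)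
    \<Rightarrow> ((real^'d^'n) \<times> (real^'d^'n)) \<Rightarrow> real^'n^'n" where
  "Qmat Psi z = (\<chi> i j. if i = j then - (\<Sum>k\<in>UNIV - {i}. Psi i k z) else Psi i j z)"

definition dobrushin :: "real^'n^'n \<Rightarrow> real" where
  "dobrushin P = (INF i. INF j. \<Sum>k\<in>UNIV. min (P $ i $ k) (P $ j $ k))"

definition vdiam :: "real^'d^'n \<Rightarrow> real" where
  "vdiam v = (SUP i. SUP j. norm (v $ i - v $ j))"

end

theory Submission
  imports Defs
begin

lemma vdiam_ge: "norm ((w::real^'d::finite^'n::finite) $ k - w $ l) \<le> vdiam w"
proof -
  have "norm (w $ k - w $ l) \<le> (SUP j. norm (w $ k - w $ j))"
    by (rule cSUP_upper) (auto intro: bdd_above_finite)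
  also have "\<dots> \<le> vdiam w" unfolding vdiam_def
    by (rule cSUP_upper) (auto intro: bdd_above_finite)
  finally show ?thesis .
qed

lemma dob_le: "dobrushin (P::real^'n::finite^'n) \<le> (\<Sum>k\<in>UNIV. min (P $ i $ k) (P $ j $ k))"
proof -
  have "dobrushin P \<le> (INF j. \<Sum>k\<in>UNIV. min (P $ i $ k) (P $ j $ k))" unfolding dobrushin_def
    by (rule cINF_lower) (auto intro: bdd_below_finite)
  also have "\<dots> \<le> (\<Sum>k\<in>UNIV. min (P $ i $ k) (P $ j $ k))"
    by (rule cINF_lower) (auto intro: bdd_below_finite)
  finally show ?thesis .
qed

lemma key:
  fixes P :: "real^'n::finite^'n" and w :: "real^'d::finite^'n"
  assumes rows: "\<And>i. (\<Sum>k\<in>UNIV. P$i$k) = 1"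
  shows "norm ((P ** w)$i - (P ** w)$j) \<le> (1 - (\<Sum>k\<in>UNIV. min (P$i$k) (P$j$k))) * vdiam w"
proof -
  define m where "m k = min (P$i$k) (P$j$k)" for k
  define a where "a k = P$i$k - m k" for k
  define b where "b k = P$j$k - m k" for k
  define c where "c = (\<Sum>k\<in>UNIV. a k)"
  have a0: "a k \<ge> 0" "b k \<ge> 0" for k by (auto simp: a_def b_def m_def)
  have c1: "c = 1 - (\<Sum>k\<in>UNIV. m k)" using rows[of i] by (simp add: c_def a_def sum_subtractf)
  have c2: "(\<Sum>k\<in>UNIV. b k) = c" using rows[of j] by (simp add: c1 b_def sum_subtractf)
  have row: "(P ** w)$r = (\<Sum>k\<in>UNIV. P$r$k *\<^sub>R w$k)" for r
    by (simp add: vec_eq_iff matrix_matrix_mult_def)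
  define D where "D = (\<Sum>k\<in>UNIV. a k *\<^sub>R w$k) - (\<Sum>k\<in>UNIV. b k *\<^sub>R w$k)"
  have DD: "(P ** w)$i - (P ** w)$j = D"
    by (simp add: row D_def a_def b_def scaleR_diff_left sum_subtractf)
  have cD: "c *\<^sub>R D = (\<Sum>k\<in>UNIV. \<Sum>l\<in>UNIV. (a k * b l) *\<^sub>R (w$k - w$l))"
  proof -
    have e1: "(\<Sum>l\<in>UNIV. b l) *\<^sub>R (\<Sum>k\<in>UNIV. a k *\<^sub>R w$k) = (\<Sum>k\<in>UNIV. \<Sum>l\<in>UNIV. (a k * b l) *\<^sub>R w$k)"
      by (simp add: scaleR_sum_right scaleR_sum_left mult.commute sum_distrib_left)
    have e2: "(\<Sum>k\<in>UNIV. a k) *\<^sub>R (\<Sum>l\<in>UNIV. b l *\<^sub>R w$l) = (\<Sum>k\<in>UNIV. \<Sum>l\<in>UNIV. (a k * b l) *\<^sub>R w$l)"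
      by (simp add: scaleR_sum_right scaleR_sum_left sum_distrib_right) (rule sum.swap)
    have "c *\<^sub>R D = (\<Sum>l\<in>UNIV. b l) *\<^sub>R (\<Sum>k\<in>UNIV. a k *\<^sub>R w$k) - (\<Sum>k\<in>UNIV. a k) *\<^sub>R (\<Sum>l\<in>UNIV. b l *\<^sub>R w$l)"
      by (simp add: D_def c2 c_def scaleR_diff_right)
    also have "\<dots> = (\<Sum>k\<in>UNIV. \<Sum>l\<in>UNIV. (a k * b l) *\<^sub>R w$k) - (\<Sum>k\<in>UNIV. \<Sum>l\<in>UNIV. (a k * b l) *\<^sub>R w$l)"
      using e1 e2 by simp
    also have "\<dots> = (\<Sum>k\<in>UNIV. \<Sum>l\<in>UNIV. (a k * b l) *\<^sub>R (w$k - w$l))"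
      by (simp add: scaleR_diff_right sum_subtractf)
    finally show ?thesis .
  qed
  have "norm (c *\<^sub>R D) \<le> (\<Sum>k\<in>UNIV. \<Sum>l\<in>UNIV. (a k * b l) * vdiam w)"
    unfolding cD
    apply (rule order_trans[OF norm_sum], rule sum_mono)
    apply (rule order_trans[OF norm_sum], rule sum_mono)
    using a0 by (simp add: vdiam_ge mult_left_mono)
  also have "\<dots> = ((\<Sum>k\<in>UNIV. a k) * (\<Sum>l\<in>UNIV. b l)) * vdiam w"
    by (simp add: sum_distrib_left sum_distrib_right) (rule sum.swap)
  also have "\<dots> = c * c * vdiam w"
    by (simp add: c2 c_def[symmetric])
  finally have ineq: "c * norm D \<le> c * (c * vdiam w)" using a0 c_def
    by (simp add: sum_nonneg mult.assoc)
  have "norm D \<le> c * vdiam w"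
  proof (cases "c = 0")
    case True
    then have "a k = 0" "b k = 0" for k using a0 c2 unfolding c_def
      by (simp_all add: sum_nonneg_eq_0_iff)
    then show ?thesis using True by (simp add: D_def)
  next
    case False
    then have "c > 0" using a0 c_def by (simp add: sum_nonneg order_less_le)
    then show ?thesis using ineq by simp
  qed
  then show ?thesis using DD c1 m_def by simp
qed

lemma bb_mm: "bounded_bilinear (\<lambda>(A::real^'n::finite^'m::finite) (B::real^'k::finite^'n). A ** B)"
proof -
  have "bilinear (\<lambda>(A::real^'n::finite^'m::finite) (B::real^'k::finite^'n). A ** B)"
    unfolding bilinear_def
    by (auto intro!: linearI simp: vec_eq_iff matrix_matrix_mult_def sum.distrib algebra_simps sum_distrib_left)
  then show ?thesis by (simp add: bilinear_conv_bounded_bilinear)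
qed

lemma const_prod:
  fixes A :: "real \<Rightarrow> real^'n::finite^'n" and B :: "real \<Rightarrow> real^'k::finite^'n"
    and Q :: "real \<Rightarrow> real^'n^'n"
  assumes "s \<le> t"
    and dA: "\<And>\<sigma>. \<sigma> \<in> {s..t} \<Longrightarrow> (A has_vector_derivative - (\<alpha> *\<^sub>R (A \<sigma> ** Q \<sigma>))) (at \<sigma> within {s..t})"
    and dB: "\<And>\<sigma>. \<sigma> \<in> {s..t} \<Longrightarrow> (B has_vector_derivative \<alpha> *\<^sub>R (Q \<sigma> ** B \<sigma>)) (at \<sigma> within {s..t})"
  shows "A s ** B s = A t ** B t"
proof -
  have "((\<lambda>\<sigma>. A \<sigma> ** B \<sigma>) has_vector_derivative 0) (at \<sigma> within {s..t})" if "\<sigma> \<in> {s..t}" for \<sigma>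
  proof -
    have "((\<lambda>\<sigma>. A \<sigma> ** B \<sigma>) has_vector_derivative
       (A \<sigma> ** (\<alpha> *\<^sub>R (Q \<sigma> ** B \<sigma>)) + (- (\<alpha> *\<^sub>R (A \<sigma> ** Q \<sigma>))) ** B \<sigma>)) (at \<sigma> within {s..t})"
      by (rule bounded_bilinear.has_vector_derivative[OF bb_mm dA[OF that] dB[OF that]])
    moreover have "A \<sigma> ** (\<alpha> *\<^sub>R (Q \<sigma> ** B \<sigma>)) + (- (\<alpha> *\<^sub>R (A \<sigma> ** Q \<sigma>))) ** B \<sigma> = 0"
      by (simp add: bounded_bilinear.scaleR_right[OF bb_mm] bounded_bilinear.scaleR_left[OF bb_mm]
          bounded_bilinear.minus_left[OF bb_mm] matrix_mul_assoc)
    ultimately show ?thesis by simp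
  qed
  then obtain c where "\<And>\<sigma>. \<sigma> \<in> {s..t} \<Longrightarrow> A \<sigma> ** B \<sigma> = c"
    using has_vector_derivative_zero_constant[OF convex_real_interval(5), of s t "\<lambda>\<sigma>. A \<sigma> ** B \<sigma>"] by blast
  then show ?thesis using assms(1) by simp
qed

lemma Qrow: "(\<Sum>j\<in>UNIV. Qmat Psi z $ i $ j) = 0"
proof -
  have "(\<Sum>j\<in>UNIV. Qmat Psi z $ i $ j) = Qmat Psi z $ i $ i + (\<Sum>j\<in>UNIV-{i}. Qmat Psi z $ i $ j)"
    by (simp add: sum.remove)
  also have "(\<Sum>j\<in>UNIV-{i}. Qmat Psi z $ i $ j) = (\<Sum>j\<in>UNIV-{i}. Psi i j z)"
    by (rule sum.cong) (auto simp: Qmat_def)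
  finally show ?thesis by (simp add: Qmat_def)
qed

theorem corollary2p8:
  fixes Psi :: "'n::finite \<Rightarrow> 'n \<Rightarrow> ((real^'d::finite^'n) \<times> (real^'d^'n)) \<Rightarrow> real"
    and x v :: "real \<Rightarrow> real^'d^'n"
    and P :: "real \<Rightarrow> real \<Rightarrow> real^'n^'n"
    and \<alpha> :: real
  assumes alpha_pos: "\<alpha> > 0"
    and Psi_nonneg: "\<And>i j z. i \<noteq> j \<Longrightarrow> Psi i j z \<ge> 0"
    and Psi_bounded: "\<And>i j. i \<noteq> j \<Longrightarrow> bounded (range (Psi i j))"
    and Psi_loclip: "\<And>i j. i \<noteq> j \<Longrightarrow> locally_lipschitz (Psi i j)"
    and x_ode: "\<And>t. t \<ge> 0 \<Longrightarrow> (x has_vector_derivative v t) (at t within {0..})"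
    and v_ode: "\<And>t. t \<ge> 0 \<Longrightarrow> (v has_vector_derivative
              (\<chi> i. \<alpha> *\<^sub>R (\<Sum>j\<in>UNIV. Qmat Psi (x t, v t) $ i $ j *\<^sub>R (v t $ j - v t $ i))))
              (at t within {0..})"
    and P_diag: "\<And>t. t \<ge> 0 \<Longrightarrow> P t t = mat 1"
    and P_dt: "\<And>s t. 0 \<le> s \<Longrightarrow> s \<le> t \<Longrightarrow>
              ((\<lambda>\<tau>. P s \<tau>) has_vector_derivative (\<alpha> *\<^sub>R (Qmat Psi (x t, v t) ** P s t)))
              (at t within {s..})"
    and P_ds: "\<And>s t. 0 \<le> s \<Longrightarrow> s \<le> t \<Longrightarrow>
              ((\<lambda>\<sigma>. P \<sigma> t) has_vector_derivative (- (\<alpha> *\<^sub>R (P s t ** Qmat Psi (x s, v s)))))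
              (at s within {0..t})"
    and st: "0 \<le> s" "s \<le> t"
  shows "vdiam (v t) \<le> (1 - dobrushin (P s t)) * vdiam (v s)"
proof -
  define Q where "Q \<sigma> = Qmat Psi (x \<sigma>, v \<sigma>)" for \<sigma>
  have vder: "(v has_vector_derivative \<alpha> *\<^sub>R (Q \<sigma> ** v \<sigma>)) (at \<sigma> within {0..})" if "\<sigma> \<ge> 0" for \<sigma>
  proof -
    have "(\<chi> i. \<alpha> *\<^sub>R (\<Sum>j\<in>UNIV. Q \<sigma> $ i $ j *\<^sub>R (v \<sigma> $ j - v \<sigma> $ i))) = \<alpha> *\<^sub>R (Q \<sigma> ** v \<sigma>)"
    proof -
      have qz: "(\<Sum>j\<in>UNIV. Q \<sigma> $ i $ j) = 0" for i unfolding Q_def by (rule Qrow)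
      have h: "(\<Sum>j\<in>UNIV. Q \<sigma> $ i $ j *\<^sub>R (v \<sigma> $ j - v \<sigma> $ i))
          = (\<Sum>j\<in>UNIV. Q \<sigma> $ i $ j *\<^sub>R v \<sigma> $ j)" for i
        by (simp add: scaleR_diff_right sum_subtractf scaleR_sum_left[symmetric] qz)
      show ?thesis unfolding h
        by (simp add: vec_eq_iff matrix_matrix_mult_def sum_component)
    qed
    then show ?thesis using v_ode[OF that] unfolding Q_def by simp
  qed
  define one :: "real^'n^'n" where "one = (\<chi> i j. 1)"
  have Qone: "Q \<sigma> ** one = 0" for \<sigma>
    using Qrow[of Psi "(x \<sigma>, v \<sigma>)"] by (simp add: vec_eq_iff matrix_matrix_mult_def one_def Q_def)
  have dA: "((\<lambda>\<sigma>. P \<sigma> t) has_vector_derivative - (\<alpha> *\<^sub>R (P \<sigma> t ** Q \<sigma>))) (at \<sigma> within {s..t})"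
    if "\<sigma> \<in> {s..t}" for \<sigma>
    using P_ds[of \<sigma> t] that st unfolding Q_def
    by (auto intro: has_vector_derivative_within_subset)
  have dB: "(v has_vector_derivative \<alpha> *\<^sub>R (Q \<sigma> ** v \<sigma>)) (at \<sigma> within {s..t})" if "\<sigma> \<in> {s..t}" for \<sigma>
    by (rule has_vector_derivative_within_subset[OF vder]) (use that st in auto)
  have e1: "P s t ** v s = P t t ** v t"
    using const_prod[of s t "\<lambda>\<sigma>. P \<sigma> t" \<alpha> Q v] st(2) dA dB by blast
  have e2: "P s t ** one = P t t ** one"
    using const_prod[of s t "\<lambda>\<sigma>. P \<sigma> t" \<alpha> Q "\<lambda>_. one"] st(2) dA by (simp add: Qone)
  have vt: "v t = P s t ** v s" using e1 P_diag[of t] st by simp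
  have rows: "(\<Sum>k\<in>UNIV. P s t $ i $ k) = 1" for i
  proof -
    have "(P s t ** one) $ i $ i = 1" using e2 P_diag[of t] st by (simp add: one_def)
    then show ?thesis by (simp add: matrix_matrix_mult_def one_def)
  qed
  have V0: "0 \<le> vdiam (v s)" using vdiam_ge[of "v s" undefined undefined] by simp
  have "norm (v t $ i - v t $ j) \<le> (1 - dobrushin (P s t)) * vdiam (v s)" for i j
  proof -
    have "norm (v t $ i - v t $ j) \<le> (1 - (\<Sum>k\<in>UNIV. min (P s t $i$k) (P s t $j$k))) * vdiam (v s)"
      unfolding vt by (rule key[OF rows])
    also have "\<dots> \<le> (1 - dobrushin (P s t)) * vdiam (v s)"
      by (rule mult_right_mono[OF _ V0]) (simp add: dob_le)
    finally show ?thesis .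
  qed
  then show ?thesis unfolding vdiam_def[of "v t"]
    by (intro cSUP_least) auto
qed

end
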